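(* Let $\Pi = (\mathcal{A}, \mathcal{E}, \mathcal{R})$ be an epistemic logic program and let $\Pi' = (\mathcal{A}', \mathcal{E}', \mathcal{R})$ be an epistemic logic program with the same set of rules $\mathcal{R}$, but with $\mathcal{A}' \supset \mathcal{A}$ and $\mathcal{E}' \supset \mathcal{E}$. Then the sets of candidate world views of $\Pi$ and $\Pi'$ coincide: $\mathrm{CWV}(\Pi) = \mathrm{CWV}(\Pi')$.
   Context: A literal over a set of propositional atoms $\mathcal{A}$ is an atom $a$ or its default negation $\neg a$. An interpretation is a set $I\subseteq\mathcal{A}$; $I\models a$ iff $a\in I$, $I\models \neg \ell$ iff $I\not\models \ell$ (so doubly negated atoms are allowed), extended to sets of literals conjunctively. A (plain) logic program is a pair $(\mathcal{A},\mathcal{R})$ of atoms and rules $a_1\vee\cdots\vee a_l \leftarrow a_{l+1},\ldots,a_m,\neg\ell_1,\ldots,\neg\ell_n$ ($a_i$ atoms, $\ell_i$ literals); for a rule $r$, $H(r)$ is the head set, $B(r)$ the body and $B^+(r)=\{a_{l+1},\ldots,a_m\}$. $M\models r$ iff $M\models B(r)$ implies $M\models$ some atom of $H(r)$; models of a program are interpretations satisfying all rules. The GL-reduct of $\Pi=(\mathcal{A},\mathcal{R})$ w.r.t. $I$ is $(\mathcal{A},\{H(r)\leftarrow B^+(r)\mid r\in\mathcal{R},\ I\models\neg\ell \text{ for all } \neg\ell\in B(r)\})$. $M$ is an answer set of $\Pi$ iff $M$ is a model of $\Pi$ and no $M'\subset M$ is a model of the GL-reduct $\Pi^M$; $AS(\Pi)$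 is the set of answer sets (triple negations $\neg\neg\neg a$ are treated as $\neg a$). An epistemic literal is $\mathbf{not}\,\ell$ for a literal $\ell$. An epistemic logic program (ELP) is a triple $(\mathcal{A},\mathcal{E},\mathcal{R})$ with $\mathcal{E}$ a set of epistemic literals over $\mathcal{A}$ and $\mathcal{R}$ a set of rules $a_1\vee\cdots\vee a_k\leftarrow \ell_1,\ldots,\ell_m,\xi_1,\ldots,\xi_j,\neg\xi_{j+1},\ldots,\neg\xi_n$ with $a_i\in\mathcal{A}$, $\ell_i$ literals, $\xi_i\in\mathcal{E}$. A guess is a subset $\Phi\subseteq\mathcal{E}$. A set $\mathcal{I}$ of interpretations is $\Phi$-compatible w.r.t. $\mathcal{E}$ iff (1) $\mathcal{I}\neq\emptyset$, (2) for each $\mathbf{not}\,\ell\in\Phi$ some $I\in\mathcal{I}$ has $I\not\models\ell$, and (3) for each $\mathbf{not}\,\ell\in\mathcal{E}\setminus\Phi$ all $I\in\mathcal{I}$ satisfy $I\models\ell$. The epistemic reduct $\Pi^\Phi$ is the logic program $(\mathcal{A},\mathcal{R}^\Phi)$ obtained by replacing in every rule each occurrence of $\mathbf{not}\,\ell\in\Phi$ by $\top$ and every remaining $\mathbf{not}$ by $\neg$. A set $\mathcal{M}$ of interpretations is a candidate world view (CWV) of $\Pi$ iff there is a guess $\Phi\subseteq\mathcal{E}$ with $\mathcal{M}=AS(\Pi^\Phi)$ and $\mathcal{M}$ $\Phi$-compatible w.r.t. $\mathcal{E}$; $\mathrm{CWV}(\Pi)$ denotes the set of CWVs. *)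

theory Defs
  imports Main
begin

datatype 'a lit = Atom 'a | Neg "'a lit"

fun lit_atoms :: "'a lit \<Rightarrow> 'a set" where
  "lit_atoms (Atom a) = {a}"
| "lit_atoms (Neg l) = lit_atoms l"

fun sat :: "'a set \<Rightarrow> 'a lit \<Rightarrow> bool" where
  "sat I (Atom a) = (a \<in> I)"
| "sat I (Neg l) = (\<not> sat I l)"

text \<open>A plain rule  h1 v ... v hl <- p1,...,pk, not l1, ..., not ln.
  The field nbody lists the literals l_i such that the negated literal (Neg l_i)
  occurs in the body.\<close>
datatype 'a rule = Rule (head: "'a list") (pbody: "'a list") (nbody: "'a lit list")

type_synonym 'a program = "'a set \<times> 'a rule set"

definition rule_sat :: "'a set \<Rightarrow> 'a rule \<Rightarrow> bool" where
  "rule_sat M r \<longleftrightarrow>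
     ((\<forall>a\<in>set (pbody r). a \<in> M) \<and> (\<forall>l\<in>set (nbody r). \<not> sat M l)
        \<longrightarrow> (\<exists>a\<in>set (head r). a \<in> M))"

definition is_model :: "'a program \<Rightarrow> 'a set \<Rightarrow> bool" where
  "is_model P M \<longleftrightarrow> M \<subseteq> fst P \<and> (\<forall>r\<in>snd P. rule_sat M r)"

definition gl_reduct :: "'a program \<Rightarrow> 'a set \<Rightarrow> 'a program" where
  "gl_reduct P I =
     (fst P, {Rule (head r) (pbody r) [] | r. r \<in> snd P \<and> (\<forall>l\<in>set (nbody r). \<not> sat I l)})"

definition AS :: "'a program \<Rightarrow> 'a set set" where
  "AS P = {M. is_model P M \<and> \<not> (\<exists>M'. M' \<subset> M \<and> is_model (gl_reduct P M) M')}"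

datatype 'a elit = ENot "'a lit"

fun elit_atoms :: "'a elit \<Rightarrow> 'a set" where
  "elit_atoms (ENot l) = lit_atoms l"

text \<open>ELP rule  h1 v ... v hk <- l1,...,lm, xi_1,...,xi_j, neg xi_(j+1), ..., neg xi_n.
  ebody: the literals l_i; epos: the xi_1..xi_j; eneg: xi_(j+1)..xi_n.\<close>
datatype 'a erule =
  ERule (ehead: "'a list") (ebody: "'a lit list") (epos: "'a elit list") (eneg: "'a elit list")

type_synonym 'a elp = "'a set \<times> 'a elit set \<times> 'a erule set"

definition erule_atoms :: "'a erule \<Rightarrow> 'a set" where
  "erule_atoms r = set (ehead r) \<union> (\<Union>l\<in>set (ebody r). lit_atoms l)
     \<union> (\<Union>x\<in>set (epos r). elit_atoms x) \<union> (\<Union>x\<in>set (eneg r). elit_atoms x)"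

definition wf_elp :: "'a elp \<Rightarrow> bool" where
  "wf_elp P \<longleftrightarrow> (case P of (A, E, R) \<Rightarrow>
      (\<forall>x\<in>E. elit_atoms x \<subseteq> A) \<and>
      (\<forall>r\<in>R. erule_atoms r \<subseteq> A \<and> set (epos r) \<subseteq> E \<and> set (eneg r) \<subseteq> E))"

fun elit_lit :: "'a elit \<Rightarrow> 'a lit" where
  "elit_lit (ENot l) = l"

text \<open>Occurrences of \<open>not l\<close> in Phi become top: dropped from the body if positive;
  if they occur negated, the body contains neg top = bottom and the rule is removed.
  Remaining \<open>not l\<close> become \<open>neg l\<close>, so a positive occurrence yields body
  literal neg l and a negated occurrence yields neg neg l.\<close>
definition ereduct_rule :: "'a elit set \<Rightarrow> 'a erule \<Rightarrow> 'a rule" where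
  "ereduct_rule Phi r =
     Rule (ehead r)
          [a. Atom a \<leftarrow> ebody r]
          ([l. Neg l \<leftarrow> ebody r]
           @ [elit_lit x. x \<leftarrow> epos r, x \<notin> Phi]
           @ [Neg (elit_lit x). x \<leftarrow> eneg r, x \<notin> Phi])"

definition ereduct :: "'a elp \<Rightarrow> 'a elit set \<Rightarrow> 'a program" where
  "ereduct P Phi = (case P of (A, E, R) \<Rightarrow>
      (A, {ereduct_rule Phi r | r. r \<in> R \<and> set (eneg r) \<inter> Phi = {}}))"

definition compatible :: "'a elit set \<Rightarrow> 'a elit set \<Rightarrow> 'a set set \<Rightarrow> bool" where
  "compatible E Phi \<I> \<longleftrightarrow>
     \<I> \<noteq> {} \<and>
     (\<forall>l. ENot l \<in> Phi \<longrightarrow> (\<exists>I\<in>\<I>. \<not> sat I l)) \<and>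
     (\<forall>l. ENot l \<in> E - Phi \<longrightarrow> (\<forall>I\<in>\<I>. sat I l))"

definition CWV :: "'a elp \<Rightarrow> 'a set set set" where
  "CWV P = {\<M>. \<exists>Phi. Phi \<subseteq> fst (snd P) \<and> \<M> = AS (ereduct P Phi)
                      \<and> compatible (fst (snd P)) Phi \<M>}"

end

theory Submission
  imports Defs
begin

definition rule_in :: "'a set \<Rightarrow> 'a rule \<Rightarrow> bool" where
  "rule_in A r \<longleftrightarrow> set (head r) \<subseteq> A \<and> set (pbody r) \<subseteq> A \<and> (\<forall>l\<in>set (nbody r). lit_atoms l \<subseteq> A)"

lemma sat_inter: "lit_atoms l \<subseteq> A \<Longrightarrow> sat (M \<inter> A) l = sat M l"
  by (induction l) auto

lemma AS_restrict:
  assumes "A \<subseteq> A'" and "\<forall>r\<in>S. rule_in A r"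
  shows "AS (A, S) = AS (A', S)"
proof
  show "AS (A, S) \<subseteq> AS (A', S)"
  proof
    fix M assume M: "M \<in> AS (A, S)"
    hence m: "M \<subseteq> A" "\<forall>r\<in>S. rule_sat M r"
      and nm: "\<not> (\<exists>M'. M' \<subset> M \<and> is_model (gl_reduct (A, S) M) M')"
      by (auto simp: AS_def is_model_def)
    have "\<not> (\<exists>M'. M' \<subset> M \<and> is_model (gl_reduct (A', S) M) M')"
    proof
      assume "\<exists>M'. M' \<subset> M \<and> is_model (gl_reduct (A', S) M) M'"
      then obtain M' where "M' \<subset> M" "is_model (gl_reduct (A', S) M) M'" by blast
      hence "is_model (gl_reduct (A, S) M) M'" using m
        by (auto simp: is_model_def gl_reduct_def)
      thus False using nm \<open>M' \<subset> M\<close> by blast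
    qed
    thus "M \<in> AS (A', S)" using m assms(1) by (auto simp: AS_def is_model_def)
  qed
next
  show "AS (A', S) \<subseteq> AS (A, S)"
  proof
    fix M assume M: "M \<in> AS (A', S)"
    hence m: "M \<subseteq> A'" "\<forall>r\<in>S. rule_sat M r"
      and nm: "\<not> (\<exists>M'. M' \<subset> M \<and> is_model (gl_reduct (A', S) M) M')"
      by (auto simp: AS_def is_model_def)
    have mod: "is_model (gl_reduct (A', S) M) (M \<inter> A)"
      unfolding is_model_def gl_reduct_def fst_conv snd_conv
    proof (intro conjI ballI)
      show "M \<inter> A \<subseteq> A'" using m by auto
    next
      fix r' assume "r' \<in> {Rule (head r) (pbody r) [] |r. r \<in> S \<and> (\<forall>l\<in>set (nbody r). \<not> sat M l)}"
      then obtain r where r: "r' = Rule (head r) (pbody r) []" "r \<in> S" "\<forall>l\<in>set (nbody r). \<not> sat M l"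
        by auto
      have ri: "rule_in A r" using r assms(2) by auto
      have "rule_sat M r" using m r by auto
      thus "rule_sat (M \<inter> A) r'" using r ri
        by (auto simp: rule_sat_def rule_in_def)
    qed
    have sub: "M \<subseteq> A"
    proof (rule ccontr)
      assume "\<not> M \<subseteq> A"
      hence "M \<inter> A \<subset> M" by auto
      thus False using nm mod by blast
    qed
    have "\<not> (\<exists>M'. M' \<subset> M \<and> is_model (gl_reduct (A, S) M) M')"
    proof
      assume "\<exists>M'. M' \<subset> M \<and> is_model (gl_reduct (A, S) M) M'"
      then obtain M' where "M' \<subset> M" "is_model (gl_reduct (A, S) M) M'" by blast
      hence "is_model (gl_reduct (A', S) M) M'" using assms(1)
        by (auto simp: is_model_def gl_reduct_def)
      thus False using nm \<open>M' \<subset> M\<close> by blast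
    qed
    thus "M \<in> AS (A, S)" using m sub by (auto simp: AS_def is_model_def)
  qed
qed

lemma filter_cong_E:
  assumes "set xs \<subseteq> E" "Phi \<inter> E = Phi' \<inter> E"
  shows "[f x. x \<leftarrow> xs, x \<notin> Phi] = [f x. x \<leftarrow> xs, x \<notin> Phi']"
  using assms by (induction xs) auto

lemma ereduct_rule_cong:
  assumes "set (epos r) \<subseteq> E" "set (eneg r) \<subseteq> E" "Phi \<inter> E = Phi' \<inter> E"
  shows "ereduct_rule Phi r = ereduct_rule Phi' r"
  unfolding ereduct_rule_def
  using filter_cong_E[OF assms(1,3), where f=elit_lit]
    filter_cong_E[OF assms(2,3), where f="\<lambda>x. Neg (elit_lit x)"] by simp

lemma lit_atoms_elit: "lit_atoms (elit_lit x) = elit_atoms x"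
  by (cases x) auto

lemma set_atoms_comp: "set [a. Atom a \<leftarrow> xs] = {a. Atom a \<in> set xs}"
proof (induction xs)
  case (Cons x xs) thus ?case by (cases x) auto
qed simp

lemma set_negs_comp: "set [l. Neg l \<leftarrow> xs] = {l. Neg l \<in> set xs}"
proof (induction xs)
  case (Cons x xs) thus ?case by (cases x) auto
qed simp

lemma set_filt_comp: "set [f x. x \<leftarrow> xs, x \<notin> Phi] = f ` (set xs - Phi)"
  by (induction xs) auto

lemma ereduct_rule_in:
  assumes "erule_atoms r \<subseteq> A"
  shows "rule_in A (ereduct_rule Phi r)"
proof -
  have h: "set (ehead r) \<subseteq> A"
    and b: "\<And>l. l \<in> set (ebody r) \<Longrightarrow> lit_atoms l \<subseteq> A"
    and p: "\<And>x. x \<in> set (epos r) \<Longrightarrow> elit_atoms x \<subseteq> A"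
    and n: "\<And>x. x \<in> set (eneg r) \<Longrightarrow> elit_atoms x \<subseteq> A"
    using assms unfolding erule_atoms_def by blast+
  have 1: "{a. Atom a \<in> set (ebody r)} \<subseteq> A" using b by fastforce
  have 2: "\<forall>l\<in>{l. Neg l \<in> set (ebody r)}. lit_atoms l \<subseteq> A" using b by fastforce
  have 3: "\<forall>l\<in>elit_lit ` (set (epos r) - Phi). lit_atoms l \<subseteq> A"
    using p by (auto simp: lit_atoms_elit)
  have 4: "\<forall>l\<in>(\<lambda>x. Neg (elit_lit x)) ` (set (eneg r) - Phi). lit_atoms l \<subseteq> A"
    using n by (auto simp: lit_atoms_elit)
  show ?thesis unfolding rule_in_def ereduct_rule_def
    using h 1 2 3 4 by (simp only: rule.sel set_append set_atoms_comp set_negs_comp set_filt_comp) blast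
qed

theorem theorem1:
  fixes A A' :: "'a set" and E E' :: "'a elit set" and R :: "'a erule set"
  assumes "wf_elp (A, E, R)"
      and "wf_elp (A', E', R)"
      and "A \<subseteq> A'"
      and "E \<subseteq> E'"
  shows "CWV (A, E, R) = CWV (A', E', R)"
proof -
  have wf: "\<forall>r\<in>R. erule_atoms r \<subseteq> A \<and> set (epos r) \<subseteq> E \<and> set (eneg r) \<subseteq> E"
    using assms(1) by (simp add: wf_elp_def)
  have red: "AS (ereduct (A,E,R) Phi) = AS (ereduct (A',E',R) Phi')"
    if "Phi \<inter> E = Phi' \<inter> E" for Phi Phi'
  proof -
    define S where "S = {ereduct_rule Phi r | r. r \<in> R \<and> set (eneg r) \<inter> Phi = {}}"
    have e1: "ereduct (A,E,R) Phi = (A, S)" unfolding ereduct_def S_def prod.case by (rule refl)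
    have "{ereduct_rule Phi' r | r. r \<in> R \<and> set (eneg r) \<inter> Phi' = {}} = S"
    proof -
      have s1: "set (epos r) \<subseteq> E" "set (eneg r) \<subseteq> E" if rR: "r \<in> R" for r
        using wf rR by auto
      have H1: "ereduct_rule Phi' r = ereduct_rule Phi r" if rR: "r \<in> R" for r
        using ereduct_rule_cong[OF s1[OF rR] \<open>Phi \<inter> E = Phi' \<inter> E\<close>] by (rule sym)
      have H2: "(set (eneg r) \<inter> Phi' = {}) = (set (eneg r) \<inter> Phi = {})" if rR: "r \<in> R" for r
        using s1(2)[OF rR] \<open>Phi \<inter> E = Phi' \<inter> E\<close> by blast
      note H = H1 H2
      show ?thesis unfolding S_def
      proof (rule Collect_cong)
        fix y
        show "(\<exists>r. y = ereduct_rule Phi' r \<and> r \<in> R \<and> set (eneg r) \<inter> Phi' = {}) =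
              (\<exists>r. y = ereduct_rule Phi r \<and> r \<in> R \<and> set (eneg r) \<inter> Phi = {})"
        proof
          assume "\<exists>r. y = ereduct_rule Phi' r \<and> r \<in> R \<and> set (eneg r) \<inter> Phi' = {}"
          then obtain r where r: "y = ereduct_rule Phi' r" "r \<in> R" "set (eneg r) \<inter> Phi' = {}" by blast
          have "y = ereduct_rule Phi r" using r(1) H1[OF r(2)] by simp
          moreover have "set (eneg r) \<inter> Phi = {}" using r(3) H2[OF r(2)] by simp
          ultimately show "\<exists>r. y = ereduct_rule Phi r \<and> r \<in> R \<and> set (eneg r) \<inter> Phi = {}"
            using r(2) by blast
        next
          assume "\<exists>r. y = ereduct_rule Phi r \<and> r \<in> R \<and> set (eneg r) \<inter> Phi = {}"
          then obtain r where r: "y = ereduct_rule Phi r" "r \<in> R" "set (eneg r) \<inter> Phi = {}" by blast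
          have "y = ereduct_rule Phi' r" using r(1) H1[OF r(2)] by simp
          moreover have "set (eneg r) \<inter> Phi' = {}" using r(3) H2[OF r(2)] by simp
          ultimately show "\<exists>r. y = ereduct_rule Phi' r \<and> r \<in> R \<and> set (eneg r) \<inter> Phi' = {}"
            using r(2) by blast
        qed
      qed
    qed
    hence e2: "ereduct (A',E',R) Phi' = (A', S)" unfolding ereduct_def prod.case by (rule arg_cong)
    have "\<forall>r\<in>S. rule_in A r"
    proof
      fix r' assume "r' \<in> S"
      hence "\<exists>r. r' = ereduct_rule Phi r \<and> r \<in> R \<and> set (eneg r) \<inter> Phi = {}"
        unfolding S_def by (simp only: mem_Collect_eq)
      then obtain r where r: "r' = ereduct_rule Phi r" "r \<in> R" by (elim exE conjE)
      have "erule_atoms r \<subseteq> A" using wf r(2) by blast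
      thus "rule_in A r'" unfolding r(1) by (rule ereduct_rule_in)
    qed
    hence "AS (A, S) = AS (A', S)" by (rule AS_restrict[OF assms(3)])
    thus ?thesis unfolding e1 e2 .
  qed
  show ?thesis
  proof
    show "CWV (A, E, R) \<subseteq> CWV (A', E', R)"
    proof
      fix M assume "M \<in> CWV (A, E, R)"
      then obtain Phi where P: "Phi \<subseteq> E" "M = AS (ereduct (A,E,R) Phi)" "compatible E Phi M"
        unfolding CWV_def fst_conv snd_conv by blast
      define Phi' where "Phi' = Phi \<union> {x \<in> E' - E. \<exists>I\<in>M. \<not> sat I (elit_lit x)}"
      have PE: "Phi \<inter> E = Phi' \<inter> E" using P(1) unfolding Phi'_def by auto
      have "M = AS (ereduct (A',E',R) Phi')" using P(2) red[OF PE] by simp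
      moreover have "Phi' \<subseteq> E'" using P(1) assms(4) unfolding Phi'_def by auto
      moreover have "compatible E' Phi' M"
        unfolding compatible_def
      proof (intro conjI allI impI)
        show "M \<noteq> {}" using P(3) by (simp add: compatible_def)
      next
        fix l assume "ENot l \<in> Phi'"
        thus "\<exists>I\<in>M. \<not> sat I l" using P(3) unfolding Phi'_def compatible_def by auto
      next
        fix l assume a: "ENot l \<in> E' - Phi'"
        show "\<forall>I\<in>M. sat I l"
        proof (cases "ENot l \<in> E")
          case True
          hence "ENot l \<in> E - Phi" using a unfolding Phi'_def by blast
          thus ?thesis using P(3) unfolding compatible_def by blast
        next
          case False
          thus ?thesis using a unfolding Phi'_def by auto
        qed
      qed
      ultimately show "M \<in> CWV (A', E', R)" unfolding CWV_def fst_conv snd_conv by blast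
    qed
  next
    show "CWV (A', E', R) \<subseteq> CWV (A, E, R)"
    proof
      fix M assume "M \<in> CWV (A', E', R)"
      then obtain Phi' where P: "Phi' \<subseteq> E'" "M = AS (ereduct (A',E',R) Phi')" "compatible E' Phi' M"
        unfolding CWV_def fst_conv snd_conv by blast
      define Phi where "Phi = Phi' \<inter> E"
      have PE: "Phi \<inter> E = Phi' \<inter> E" unfolding Phi_def by auto
      have "M = AS (ereduct (A,E,R) Phi)" using P(2) red[OF PE] by simp
      moreover have "Phi \<subseteq> E" unfolding Phi_def by auto
      moreover have "compatible E Phi M"
        using P(3) assms(4) unfolding compatible_def Phi_def by blast
      ultimately show "M \<in> CWV (A, E, R)" unfolding CWV_def fst_conv snd_conv by blast
    qed
  qed
qed

end
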